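(* Let $q$ be a prime power and $n$ a positive integer. Let $g, h\in \mathbb{F}_q[x]$ be relatively prime polynomials such that $g(x)$ divides $x^n-1$ and $x^n-1$ divides $g(x)\cdot h(x)$. Then for every polynomial $f\in \mathbb{F}_{q^n}[x]$, the polynomial $P_{f,g,h}(x)=f(L_g(x))+L_h(x)$ is a permutation polynomial of $\mathbb{F}_{q^n}$ if and only if $L_g(f(x))$ induces a permutation of the set $L_g(\mathbb{F}_{q^n})=\{L_g(c):c\in\mathbb{F}_{q^n}\}$. In particular, if $f(L_g(\mathbb{F}_{q^n}))\subseteq L_g(\mathbb{F}_{q^n})$, then $P_{f,g,h}$ is a permutation polynomial of $\mathbb{F}_{q^n}$ if and only if $f$ induces a permutation of $L_g(\mathbb{F}_{q^n})$.
   Context: For a polynomial $u(x)=\sum_{i=0}^m a_i x^i\in\mathbb{F}_q[x]$, its linearized $q$-associate is $L_u(x)=\sum_{i=0}^m a_i x^{q^i}$. A permutation polynomial of $\mathbb{F}_{q^n}$ is a polynomial inducing a bijection of $\mathbb{F}_{q^n}$. *)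

theory Defs
  imports "HOL-Computational_Algebra.Polynomial"
begin

text \<open>An embedding of the field 'b (playing the role of F_q) into the field 'a
  (playing the role of F_{q^n}): an injective ring homomorphism.\<close>
definition field_embedding :: "('b::field \<Rightarrow> 'a::field) \<Rightarrow> bool" where
  "field_embedding emb \<longleftrightarrow> inj emb \<and> emb 1 = 1 \<and>
     (\<forall>x y. emb (x + y) = emb x + emb y) \<and> (\<forall>x y. emb (x * y) = emb x * emb y)"

text \<open>Linearized q-associate L_u(x) = sum a_i x^(q^i), with q = CARD('b), evaluated in 'a
  via the embedding.\<close>
definition lin_assoc :: "('b::{finite,field} \<Rightarrow> 'a::field) \<Rightarrow> 'b poly \<Rightarrow> 'a \<Rightarrow> 'a" where
  "lin_assoc emb u x = (\<Sum>i\<le>degree u. emb (coeff u i) * x ^ (card (UNIV :: 'b set) ^ i))"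

end

theory Submission
  imports Defs "HOL-Algebra.Sylow"
begin

definition addgrp :: "('c::ab_group_add) monoid" where
  "addgrp = \<lparr>carrier = UNIV, mult = (+), one = 0\<rparr>"

lemma addgrp_group: "group (addgrp :: ('c::ab_group_add) monoid)"
  unfolding addgrp_def
  by (rule groupI) (auto simp: add.assoc intro: exI[of _ "- _"])

lemma addgrp_pow: "x [^]\<^bsub>(addgrp::('c::ring_1) monoid)\<lparr>carrier := H\<rparr>\<^esub> (k::nat) = of_nat k * (x::'c::ring_1)"
  by (induction k) (auto simp: addgrp_def algebra_simps)

lemma prime_dvd_card_field:
  assumes r: "prime r" and d: "r dvd card (UNIV::'c::{finite,field} set)"
  shows "r = CHAR('c)"
proof (rule ccontr)
  assume ne: "r \<noteq> CHAR('c)"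
  have pc: "prime CHAR('c)"
    using prime_CHAR_semidom[where ?'a='c] finite_imp_CHAR_pos[of ] by (simp add: finite_imp_CHAR_pos)
  obtain m where m: "card (UNIV::'c set) = r ^ 1 * m" using d by auto
  have ord: "order (addgrp::'c monoid) = r ^ 1 * m" using m by (simp add: order_def addgrp_def)
  have "\<exists>H. subgroup H (addgrp::'c monoid) \<and> card H = r ^ 1"
    by (rule sylow_thm[OF r addgrp_group ord]) (simp add: addgrp_def)
  then obtain H where H: "subgroup H (addgrp::'c monoid)" "card H = r ^ 1" by blast
  have "card H \<ge> 2" using H r prime_ge_2_nat by auto
  have "\<not> H \<subseteq> {0}"
  proof
    assume "H \<subseteq> {0}"
    hence "card H \<le> card {0::'c}" by (intro card_mono) auto
    thus False using \<open>card H \<ge> 2\<close> by simp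
  qed
  then obtain x :: 'c where x: "x \<in> H" "x \<noteq> 0" by blast
  have fH: "finite H" by simp
  have cl: "y + x \<in> H" if "y \<in> H" for y
    using subgroup.m_closed[OF H(1) that x(1)] by (simp add: addgrp_def)
  have img: "(\<lambda>y. y + x) ` H = H"
    by (rule endo_inj_surj[OF fH]) (auto simp: cl inj_on_def)
  have "(\<Sum>y\<in>H. y) = (\<Sum>y\<in>(\<lambda>y. y + x) ` H. y)" by (simp only: img)
  also have "\<dots> = (\<Sum>y\<in>H. y + x)" by (subst sum.reindex) (auto simp: inj_on_def)
  also have "\<dots> = (\<Sum>y\<in>H. y) + of_nat r * x" using H(2) by (simp add: sum.distrib)
  finally have xr: "of_nat r * x = 0" by simp
  have "coprime r CHAR('c)" using r pc ne by (simp add: primes_coprime)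
  then obtain u v where uv: "r * u = CHAR('c) * v + 1"
    using bezout_nat[of r "CHAR('c)"] r by (auto simp: coprime_iff_gcd_eq_1 prime_gt_0_nat)
  have "of_nat (r * u) * x = 0" by (simp only: of_nat_mult mult.commute[of "of_nat r" "of_nat u"] mult.assoc xr mult_zero_right)
  also have "of_nat (r * u) * x = of_nat (CHAR('c) * v + 1) * x" by (simp only: uv)
  also have "\<dots> = x" by (simp add: algebra_simps)
  finally show False using x by simp
qed

lemma card_field_prime_power: "\<exists>k. card (UNIV::'c::{finite,field} set) = CHAR('c) ^ k"
proof -
  have pc: "prime CHAR('c)"
    using prime_CHAR_semidom[where ?'a='c] by (simp add: finite_imp_CHAR_pos)
  have nz: "card (UNIV::'c set) \<noteq> 0" by simp
  obtain y where y: "card (UNIV::'c set) = CHAR('c) ^ multiplicity CHAR('c) (card (UNIV::'c set)) * y" "\<not> CHAR('c) dvd y"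
    using multiplicity_decompose'[where x="card (UNIV::'c set)" and p="CHAR('c)"] nz pc by (auto simp: prime_gt_1_nat)
  have "y = 1"
  proof (rule ccontr)
    assume "y \<noteq> 1"
    then obtain r where r: "prime r" "r dvd y" using prime_factor_nat by blast
    hence "r dvd card (UNIV::'c set)" using y(1) by (metis dvd_mult_left dvd_trans dvd_triv_right)
    hence "r = CHAR('c)" using prime_dvd_card_field r(1) by blast
    thus False using r y by simp
  qed
  thus ?thesis using y by auto
qed

lemma pow_card_same:
  fixes x :: "'c::{finite,field}"
  shows "x ^ card (UNIV :: 'c set) = x"
proof (cases "x = 0")
  case False
  have "x * (\<Prod>y\<in>UNIV-{0}. x * y) = x * x ^ (card (UNIV :: 'c set) - 1) * \<Prod>(UNIV-{0})"
    by (simp add: prod.distrib mult_ac)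
  also have "x * x ^ (card (UNIV :: 'c set) - 1) = x ^ Suc (card (UNIV :: 'c set) - 1)"
    by (subst power_Suc) auto
  also have "Suc (card (UNIV :: 'c set) - 1) = card (UNIV :: 'c set)"
    using finite_UNIV_card_ge_0[where ?'a = 'c] by simp
  also have "(\<Prod>y\<in>UNIV-{0}. x * y) = (\<Prod>y\<in>UNIV-{0}. y)"
    by (rule prod.reindex_bij_witness[of _ "\<lambda>y. y / x" "\<lambda>y. x * y"]) (use False in auto)
  finally show ?thesis
    by simp
qed (use finite_UNIV_card_ge_0[where ?'a = 'c] in auto)

lemma pow_card_pow_same:
  fixes x :: "'c::{finite,field}"
  shows "x ^ (card (UNIV :: 'c set) ^ k) = x"
  by (induction k) (simp_all add: pow_card_same power_mult power_Suc2)

context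
  fixes emb :: "'b::{finite,field} \<Rightarrow> 'a::{finite,field}"
  assumes emb: "field_embedding emb"
    and qp: "\<exists>j. card (UNIV::'b set) = CHAR('a) ^ j"
begin

lemma emb_add: "emb (x + y) = emb x + emb y" using emb by (simp add: field_embedding_def)
lemma emb_mult: "emb (x * y) = emb x * emb y" using emb by (simp add: field_embedding_def)
lemma emb_0 [simp]: "emb 0 = 0"
proof -
  have "emb 0 + emb 0 = emb 0 + 0" using emb_add[of 0 0] by simp
  thus ?thesis by (simp only: add_left_cancel)
qed
lemma emb_1 [simp]: "emb 1 = 1" using emb by (simp add: field_embedding_def)
lemma emb_power: "emb (x ^ k) = emb x ^ k" by (induction k) (simp_all add: emb_mult)
lemma emb_frob: "emb c ^ (card (UNIV::'b set) ^ i) = emb c"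
  by (simp add: pow_card_pow_same flip: emb_power)

lemma prime_char: "prime CHAR('a)"
  using prime_CHAR_semidom[where ?'a='a] by (simp add: finite_imp_CHAR_pos)

lemma frob_add: "((x::'a) + y) ^ (card (UNIV::'b set) ^ i) = x ^ (card (UNIV::'b set) ^ i) + y ^ (card (UNIV::'b set) ^ i)"
proof -
  obtain j where j: "card (UNIV::'b set) = CHAR('a) ^ j" using qp by blast
  show ?thesis by (rule freshmans_dream'[OF prime_char, of _ "j*i"]) (simp add: j power_mult)
qed

lemma frob_sum: "(sum (f::_ \<Rightarrow> 'a) A) ^ (card (UNIV::'b set) ^ i) = (\<Sum>k\<in>A. f k ^ (card (UNIV::'b set) ^ i))"
proof -
  obtain j where j: "card (UNIV::'b set) = CHAR('a) ^ j" using qp by blast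
  show ?thesis by (rule freshmans_dream_sum'[OF prime_char, of _ "j*i"]) (simp add: j power_mult)
qed

abbreviation "L \<equiv> lin_assoc emb"

lemma L_bound: assumes "degree u \<le> N"
  shows "L u x = (\<Sum>i\<le>N. emb (coeff u i) * x ^ (card (UNIV::'b set) ^ i))"
  unfolding lin_assoc_def
  by (rule sum.mono_neutral_left) (use assms in \<open>auto simp: coeff_eq_0\<close>)

lemma L_add_poly: "L (u + v) x = L u x + L v x"
proof -
  let ?N = "max (degree u) (degree v)"
  have "L (u + v) x = (\<Sum>i\<le>?N. emb (coeff (u+v) i) * x ^ (card (UNIV::'b set) ^ i))"
    by (rule L_bound) (meson degree_add_le max.cobounded1 max.cobounded2)
  also have "\<dots> = (\<Sum>i\<le>?N. emb (coeff u i) * x ^ (card (UNIV::'b set) ^ i)) + (\<Sum>i\<le>?N. emb (coeff v i) * x ^ (card (UNIV::'b set) ^ i))"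
    by (simp add: emb_add distrib_right sum.distrib)
  also have "\<dots> = L u x + L v x" by (simp add: L_bound[of u ?N] L_bound[of v ?N])
  finally show ?thesis .
qed

lemma L_const: "L [:a:] x = emb a * x"
  by (simp add: lin_assoc_def)

lemma L_pCons0: "L (pCons 0 w) x = (L w x) ^ card (UNIV::'b set)"
proof -
  let ?q = "card (UNIV::'b set)"
  have "L (pCons 0 w) x = (\<Sum>i\<le>Suc (degree w). emb (coeff (pCons 0 w) i) * x ^ (?q ^ i))"
    by (rule L_bound) (simp add: degree_pCons_le)
  also have "\<dots> = (\<Sum>i\<le>degree w. emb (coeff w i) * x ^ (?q ^ Suc i))"
    by (subst sum.atMost_Suc_shift) simp
  also have "\<dots> = (\<Sum>i\<le>degree w. (emb (coeff w i) * x ^ (?q ^ i)) ^ ?q)"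
    by (intro sum.cong refl) (simp add: power_mult_distrib emb_frob[of _ 1, simplified] power_Suc2 mult.commute flip: power_mult)
  also have "\<dots> = (L w x) ^ ?q"
    unfolding lin_assoc_def by (rule frob_sum[of _ _ 1, simplified, symmetric])
  finally show ?thesis .
qed

lemma L_pCons: "L (pCons a w) x = emb a * x + (L w x) ^ card (UNIV::'b set)"
proof -
  have "pCons a w = [:a:] + pCons 0 w" by simp
  hence "L (pCons a w) x = L [:a:] x + L (pCons 0 w) x" by (metis L_add_poly)
  thus ?thesis by (simp add: L_const L_pCons0)
qed

lemma L_additive: "L u (x + y) = L u x + L u y"
  by (simp add: lin_assoc_def frob_add distrib_left sum.distrib)

lemma L_zero_arg [simp]: "L u 0 = 0"
proof -
  have "L u 0 + L u 0 = L u 0 + 0" using L_additive[of u 0 0] by simp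
  thus ?thesis by (simp only: add_left_cancel)
qed

lemma L_minus_arg: "L u (x - y) = L u x - L u y"
  using L_additive[of u "x - y" y] by (simp add: algebra_simps)

lemma L_zero_poly [simp]: "L 0 x = 0" by (simp add: lin_assoc_def)

lemma L_mult: "L (u * v) x = L u (L v x)"
proof (induction u)
  case 0 then show ?case by simp
next
  case (pCons a u)
  have "pCons a u * v = smult a v + pCons 0 (u * v)" by simp
  have "L (smult a v) y = emb a * L v y" for y
    by (simp add: lin_assoc_def emb_mult sum_distrib_left mult_ac)
  hence "L (pCons a u * v) x = emb a * L v x + (L (u * v) x) ^ card (UNIV::'b set)"
    by (simp add: L_add_poly L_pCons0)
  also have "\<dots> = L (pCons a u) (L v x)" by (simp add: L_pCons pCons.IH)
  finally show ?case .
qed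

lemma L_one: "L 1 x = x"
  using L_const[of 1 x] by (simp add: one_pCons)

lemma L_minus_poly: "L (u - v) x = L u x - L v x"
  using L_add_poly[of "u - v" v x] by simp

lemma L_monom1: "L (monom 1 k) x = x ^ (card (UNIV::'b set) ^ k)"
proof -
  have "\<And>i. emb (if k = i then 1 else 0) * x ^ (card (UNIV::'b set) ^ i) = (if i = k then x ^ (card (UNIV::'b set) ^ i) else 0)"
    by auto
  thus ?thesis by (simp add: lin_assoc_def degree_monom_eq coeff_monom)
qed

end

lemma euclid_bezout_aux:
  fixes g h :: "'c::euclidean_ring"
  shows "\<exists>a b d. a * g + b * h = d \<and> d dvd g \<and> d dvd h"
proof (induction "euclidean_size h" arbitrary: g h rule: less_induct)
  case less
  show ?case
  proof (cases "h = 0")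
    case True
    thus ?thesis by (intro exI[of _ 1] exI[of _ 0] exI[of _ g]) simp
  next
    case False
    hence "euclidean_size (g mod h) < euclidean_size h" by (rule mod_size_less)
    then obtain a b d where abd: "a * h + b * (g mod h) = d" "d dvd h" "d dvd (g mod h)"
      using less by blast
    have gm: "g mod h = g - (g div h) * h" by (simp add: minus_div_mult_eq_mod)
    have "b * g + (a - b * (g div h)) * h = d" using abd(1) unfolding gm by (simp add: algebra_simps)
    moreover have "d dvd g"
    proof -
      have "g = (g div h) * h + g mod h" by simp
      thus ?thesis using abd(2,3) by (metis dvd_add dvd_mult)
    qed
    ultimately show ?thesis using abd(2) by blast
  qed
qed

lemma euclid_bezout:
  fixes g h :: "'c::euclidean_ring"
  assumes "coprime g h"
  shows "\<exists>a b. a * g + b * h = 1"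
proof -
  obtain a b d where abd: "a * g + b * h = d" "d dvd g" "d dvd h"
    using euclid_bezout_aux by blast
  have "is_unit d" using assms abd(2,3) by (rule coprime_common_divisor)
  then obtain e where e: "1 = d * e" by (auto elim: dvdE)
  have "(e * a) * g + (e * b) * h = e * (a * g + b * h)" by (simp add: algebra_simps)
  also have "\<dots> = 1" using abd(1) e by (simp add: mult.commute)
  finally have "(e * a) * g + (e * b) * h = 1" .
  thus ?thesis by blast
qed

lemma additive_diff:
  fixes f :: "'c::ab_group_add \<Rightarrow> 'd::ab_group_add"
  assumes "\<And>x y. f (x + y) = f x + f y"
  shows "f (x - y) = f x - f y"
proof -
  have "f x = f (x - y) + f y" using assms[of "x - y" y] by simp
  thus ?thesis by (simp add: eq_diff_eq)
qed

lemma additive_zero: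
  fixes f :: "'c::ab_group_add \<Rightarrow> 'd::ab_group_add"
  assumes "\<And>x y. f (x + y) = f x + f y"
  shows "f 0 = 0"
  using additive_diff[of f 0 0, OF assms] by simp

lemma abstract_main:
  fixes G H A B F :: "'a::{finite,ab_group_add} \<Rightarrow> 'a"
  assumes addG: "\<And>x y. G (x+y) = G x + G y" and addH: "\<And>x y. H (x+y) = H x + H y"
    and addA: "\<And>x y. A (x+y) = A x + A y" and addB: "\<And>x y. B (x+y) = B x + B y"
    and GH: "\<And>x. G (H x) = 0" and HG: "\<And>x. H (G x) = 0"
    and dec: "\<And>x. A (G x) + B (H x) = x"
    and GB: "\<And>x. G (B x) = B (G x)" and HB: "\<And>x. H (B x) = B (H x)"
  shows "(bij (\<lambda>x. F (G x) + H x) \<longleftrightarrow> bij_betw (\<lambda>x. G (F x)) (range G) (range G))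
       \<and> (F ` range G \<subseteq> range G \<longrightarrow>
            (bij (\<lambda>x. F (G x) + H x) \<longleftrightarrow> bij_betw F (range G) (range G)))"
proof -
  define P where "P = (\<lambda>x. F (G x) + H x)"
  have G0: "G 0 = 0" and H0: "H 0 = 0" and A0: "A 0 = 0" and B0: "B 0 = 0"
    using additive_zero addG addH addA addB by blast+
  have Gd: "G (x - y) = G x - G y" for x y using additive_diff[OF addG] .
  have Hd: "H (x - y) = H x - H y" for x y using additive_diff[OF addH] .
  have ker0: "x = 0" if "G x = 0" "H x = 0" for x
    using dec[of x] that A0 B0 by simp
  have fin: "finite (range G)" by simp
  have maps: "(\<lambda>x. G (F x)) ` range G \<subseteq> range G" by auto
  have part1: "bij P \<longleftrightarrow> bij_betw (\<lambda>x. G (F x)) (range G) (range G)"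
  proof
    assume bP: "bij P"
    have "inj_on (\<lambda>x. G (F x)) (range G)"
    proof (rule inj_onI)
      fix y1 y2 assume "y1 \<in> range G" "y2 \<in> range G" and eq: "G (F y1) = G (F y2)"
      then obtain x y where y1: "y1 = G x" and y2: "y2 = G y" by auto
      define R where "R = F (G y) - F (G x) + H y - H x"
      have GR: "G R = 0" unfolding R_def using eq y1 y2
        by (simp add: Gd addG GH)
      define w where "w = B R"
      have Gw: "G w = 0" unfolding w_def by (simp add: GB GR B0)
      have Hw: "H w = R" unfolding w_def using dec[of R] by (simp add: HB GR A0)
      have "P (x + w) = P y" unfolding P_def using Gw Hw
        by (simp add: addG addH R_def)
      hence "x + w = y" using bP by (simp add: bij_def inj_def)
      hence "G y = G x" using Gw by (auto simp: addG)
      thus "y1 = y2" using y1 y2 by simp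
    qed
    thus "bij_betw (\<lambda>x. G (F x)) (range G) (range G)"
      using endo_inj_surj[OF fin maps] by (simp add: bij_betw_def)
  next
    assume bb: "bij_betw (\<lambda>x. G (F x)) (range G) (range G)"
    have "inj P"
    proof (rule injI)
      fix x y assume eq: "P x = P y"
      hence "G (P x) = G (P y)" by simp
      hence "G (F (G x)) = G (F (G y))" unfolding P_def by (simp add: addG GH)
      hence gxy: "G x = G y" using bb by (auto simp: bij_betw_def inj_on_def)
      hence "H x = H y" using eq unfolding P_def by simp
      hence "G (x - y) = 0" "H (x - y) = 0" using gxy by (simp_all add: Gd Hd)
      thus "x = y" using ker0 by force
    qed
    thus "bij P" using finite_UNIV_inj_surj[of P] by (simp add: bij_def)
  qed
  have Gbij: "bij_betw G (range G) (range G)"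
  proof -
    have "inj_on G (range G)"
    proof (rule inj_onI)
      fix y1 y2 assume "y1 \<in> range G" "y2 \<in> range G" and eq: "G y1 = G y2"
      then obtain x y where y1: "y1 = G x" and y2: "y2 = G y" by auto
      have "G (y1 - y2) = 0" using eq by (simp add: Gd)
      moreover have "H (y1 - y2) = 0" using y1 y2 by (simp add: Hd HG)
      ultimately show "y1 = y2" using ker0 by force
    qed
    moreover have "G ` range G \<subseteq> range G" by auto
    ultimately show ?thesis using endo_inj_surj[OF fin] by (simp add: bij_betw_def)
  qed
  have part2: "bij_betw (\<lambda>x. G (F x)) (range G) (range G) \<longleftrightarrow> bij_betw F (range G) (range G)"
    if FS: "F ` range G \<subseteq> range G"
  proof
    assume bb: "bij_betw (\<lambda>x. G (F x)) (range G) (range G)"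
    have "inj_on F (range G)"
      using bb by (auto simp: bij_betw_def inj_on_def)
    thus "bij_betw F (range G) (range G)"
      using endo_inj_surj[OF fin FS] by (simp add: bij_betw_def)
  next
    assume "bij_betw F (range G) (range G)"
    hence "bij_betw (G \<circ> F) (range G) (range G)" using Gbij by (rule bij_betw_trans)
    thus "bij_betw (\<lambda>x. G (F x)) (range G) (range G)" by (simp add: comp_def)
  qed
  show ?thesis using part1 part2 unfolding P_def by blast
qed

theorem proposition2p7:
  fixes emb :: "'b::{finite,field} \<Rightarrow> 'a::{finite,field}"
    and n :: nat and g h :: "'b poly" and f :: "'a poly"
  assumes "n > 0"
    and "field_embedding emb"
    and "card (UNIV :: 'a set) = card (UNIV :: 'b set) ^ n"
    and "coprime g h"
    and "g dvd (monom 1 n - 1)"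
    and "(monom 1 n - 1) dvd (g * h)"
  shows "(bij (\<lambda>x. poly f (lin_assoc emb g x) + lin_assoc emb h x) \<longleftrightarrow>
            bij_betw (\<lambda>x. lin_assoc emb g (poly f x)) (range (lin_assoc emb g)) (range (lin_assoc emb g)))
       \<and> (poly f ` range (lin_assoc emb g) \<subseteq> range (lin_assoc emb g) \<longrightarrow>
            (bij (\<lambda>x. poly f (lin_assoc emb g x) + lin_assoc emb h x) \<longleftrightarrow>
             bij_betw (poly f) (range (lin_assoc emb g)) (range (lin_assoc emb g))))"
proof -
  note emb = assms(2)
  have pc: "prime CHAR('a)"
    using prime_CHAR_semidom[where ?'a='a] by (simp add: finite_imp_CHAR_pos)
  obtain k where k: "card (UNIV::'a set) = CHAR('a) ^ k" using card_field_prime_power by blast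
  have "card (UNIV::'b set) dvd CHAR('a) ^ k"
    using assms(1,3) k by (metis dvd_power gr0_implies_Suc zero_less_Suc)
  hence qp: "\<exists>j. card (UNIV::'b set) = CHAR('a) ^ j"
    using divides_primepow_nat[OF pc] by blast
  obtain a b where ab: "a * g + b * h = 1"
    using euclid_bezout[OF assms(4)] by blast
  obtain c where c: "g * h = (monom 1 n - 1) * c" using assms(6) by blast
  have Lmul: "lin_assoc emb (u * v) x = lin_assoc emb u (lin_assoc emb v x)" for u v x
    using L_mult[OF emb qp] .
  have Ladd: "lin_assoc emb u (x + y) = lin_assoc emb u x + lin_assoc emb u y" for u x y
    using L_additive[OF emb qp] .
  have Lz: "lin_assoc emb (monom 1 n - 1) y = 0" for y
  proof -
    have "lin_assoc emb (monom 1 n - 1) y = y ^ (card (UNIV::'b set) ^ n) - y"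
      by (simp add: L_minus_poly[OF emb qp] L_monom1[OF emb qp] L_one[OF emb qp])
    also have "y ^ (card (UNIV::'b set) ^ n) = y" using assms(3) pow_card_same[of y] by simp
    finally show ?thesis by simp
  qed
  have GH: "lin_assoc emb g (lin_assoc emb h x) = 0" for x
  proof -
    have "lin_assoc emb g (lin_assoc emb h x) = lin_assoc emb (g * h) x" by (simp add: Lmul)
    also have "\<dots> = lin_assoc emb ((monom 1 n - 1) * c) x" by (simp only: c)
    also have "\<dots> = lin_assoc emb (monom 1 n - 1) (lin_assoc emb c x)" by (rule Lmul)
    also have "\<dots> = 0" by (rule Lz)
    finally show ?thesis .
  qed
  have HG: "lin_assoc emb h (lin_assoc emb g x) = 0" for x
    using GH[of x] by (simp add: mult.commute flip: Lmul)
  have dec: "lin_assoc emb a (lin_assoc emb g x) + lin_assoc emb b (lin_assoc emb h x) = x" for x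
    using ab by (simp add: L_one[OF emb qp] flip: Lmul L_add_poly[OF emb qp])
  have GB: "lin_assoc emb g (lin_assoc emb b x) = lin_assoc emb b (lin_assoc emb g x)" for x
    by (simp add: mult.commute flip: Lmul)
  have HB: "lin_assoc emb h (lin_assoc emb b x) = lin_assoc emb b (lin_assoc emb h x)" for x
    by (simp add: mult.commute flip: Lmul)
  show ?thesis
    by (rule abstract_main[where A = "lin_assoc emb a" and B = "lin_assoc emb b"])
       (simp_all add: Ladd GH HG dec GB HB)
qed

end
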